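(* Let $V_-\in\mathbb C(x)$, $\lambda_1\in\mathbb C$, and let $\Psi_{\lambda_1}$ be a nonzero solution of $-\partial_x^2\Psi+V_-\Psi=\lambda_1\Psi$ with $W:=-\partial_x(\ln\Psi_{\lambda_1})$ algebraic over $\mathbb C(x)$; let $V_+=V_--2\partial_x^2(\ln\Psi_{\lambda_1})$ (so that $V_\mp-\lambda_1=W^2\mp\partial_xW$). Then the following are equivalent: (i) $W\in\mathbb C(x)$; (ii) $V_+\in\mathbb C(x)$ and, for every $\lambda\ne\lambda_1$, the Picard–Vessiot extensions over $\mathbb C(x)$ of $-\partial_x^2\Psi+V_-\Psi=\lambda\Psi$ and of $-\partial_x^2\Psi+V_+\Psi=\lambda\Psi$ coincide.
   Context: Condition (ii) is what the paper calls the Darboux transformation being strong iso-Galoisian: same base field and same Picard–Vessiot extensions. *)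

theory Defs
  imports "HOL-Computational_Algebra.Polynomial"
begin

text \<open>Differential algebra inside an ambient differential field of type 'a
  with derivation D.\<close>

definition derivation :: "('a::field \<Rightarrow> 'a) \<Rightarrow> bool" where
  "derivation D \<longleftrightarrow> (\<forall>a b. D (a + b) = D a + D b \<and> D (a * b) = D a * b + a * D b)"

definition subfield :: "'a::field set \<Rightarrow> bool" where
  "subfield E \<longleftrightarrow> 0 \<in> E \<and> 1 \<in> E \<and>
     (\<forall>a\<in>E. \<forall>b\<in>E. a + b \<in> E \<and> a - b \<in> E \<and> a * b \<in> E) \<and> (\<forall>a\<in>E. inverse a \<in> E)"

definition diff_subfield :: "('a::field \<Rightarrow> 'a) \<Rightarrow> 'a set \<Rightarrow> bool" where
  "diff_subfield D E \<longleftrightarrow> subfield E \<and> (\<forall>a\<in>E. D a \<in> E)"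

definition diff_closure :: "('a::field \<Rightarrow> 'a) \<Rightarrow> 'a set \<Rightarrow> 'a set" where
  "diff_closure D S = \<Inter>{E. diff_subfield D E \<and> S \<subseteq> E}"

text \<open>The field C(x) inside the ambient field: quotients of polynomials in x with
  complex coefficients, the complex numbers being embedded via iota.\<close>
definition poly_eval :: "(complex \<Rightarrow> 'a::field) \<Rightarrow> complex poly \<Rightarrow> 'a \<Rightarrow> 'a" where
  "poly_eval \<iota> p x = (\<Sum>i\<le>degree p. \<iota> (coeff p i) * x ^ i)"

definition ratfun_field :: "(complex \<Rightarrow> 'a::field) \<Rightarrow> 'a \<Rightarrow> 'a set" where
  "ratfun_field \<iota> x = {poly_eval \<iota> p x / poly_eval \<iota> q x | p q. poly_eval \<iota> q x \<noteq> 0}"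

definition algebraic_over :: "'a::field set \<Rightarrow> 'a \<Rightarrow> bool" where
  "algebraic_over K w \<longleftrightarrow> (\<exists>p::'a poly. p \<noteq> 0 \<and> (\<forall>i. coeff p i \<in> K) \<and> poly p w = 0)"

definition schr_sol :: "('a::field \<Rightarrow> 'a) \<Rightarrow> 'a \<Rightarrow> 'a \<Rightarrow> 'a \<Rightarrow> bool" where
  "schr_sol D V lam y \<longleftrightarrow> - D (D y) + V * y = lam * y"

definition wronskian :: "('a::field \<Rightarrow> 'a) \<Rightarrow> 'a \<Rightarrow> 'a \<Rightarrow> 'a" where
  "wronskian D y1 y2 = y1 * D y2 - D y1 * y2"

definition PV_ext :: "('a::field \<Rightarrow> 'a) \<Rightarrow> 'a set \<Rightarrow> 'a \<Rightarrow> 'a \<Rightarrow> 'a set \<Rightarrow> bool" where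
  "PV_ext D K V lam E \<longleftrightarrow>
     (\<exists>y1 y2. schr_sol D V lam y1 \<and> schr_sol D V lam y2 \<and> wronskian D y1 y2 \<noteq> 0 \<and>
        E = diff_closure D (K \<union> {y1, y2}) \<and>
        {c \<in> E. D c = 0} = {c \<in> K. D c = 0})"

end

theory Submission
  imports Defs
begin


lemma der_add: "derivation D \<Longrightarrow> D (a + b) = D a + D b"
  by (simp add: derivation_def)
lemma der_mult: "derivation D \<Longrightarrow> D (a * b) = D a * b + a * D b"
  by (simp add: derivation_def)
lemma der_zero: "derivation D \<Longrightarrow> D 0 = 0"
  using der_add[of D 0 0] by (metis add.right_neutral add_left_cancel)
lemma der_neg: "derivation D \<Longrightarrow> D (- a) = - D a"
  using der_add[of D a "-a"] der_zero[of D] by (metis add.right_inverse minus_unique)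
lemma der_diff: "derivation D \<Longrightarrow> D (a - b) = D a - D b"
  using der_add[of D a "-b"] der_neg[of D b] by simp
lemma der_div:
  assumes "derivation D" "(b::'a::field) \<noteq> 0"
  shows "D (a / b) = (D a * b - a * D b) / (b * b)"
proof -
  have "D a = D ((a/b) * b)" using assms(2) by simp
  also have "\<dots> = D (a/b) * b + (a/b) * D b" by (rule der_mult[OF assms(1)])
  finally have "D a = D (a/b) * b + (a/b) * D b" .
  then show ?thesis using assms(2) by (simp add: field_simps)
qed

lemma ds_props:
  assumes "diff_subfield D E"
  shows "0 \<in> E" "1 \<in> E" "a \<in> E \<Longrightarrow> b \<in> E \<Longrightarrow> a + b \<in> E"
    "a \<in> E \<Longrightarrow> b \<in> E \<Longrightarrow> a - b \<in> E" "a \<in> E \<Longrightarrow> b \<in> E \<Longrightarrow> a * b \<in> E"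
    "a \<in> E \<Longrightarrow> inverse a \<in> E" "a \<in> E \<Longrightarrow> D a \<in> E"
  using assms by (auto simp: diff_subfield_def subfield_def)

lemma ds_neg: "diff_subfield D E \<Longrightarrow> a \<in> E \<Longrightarrow> - a \<in> E"
  using ds_props(4)[of D E 0 a] ds_props(1)[of D E] by simp

lemma ds_div: "diff_subfield D E \<Longrightarrow> a \<in> E \<Longrightarrow> b \<in> E \<Longrightarrow> a / b \<in> E"
  by (auto simp: diff_subfield_def subfield_def divide_inverse)

lemma closure_ds: "diff_subfield D (diff_closure D S)"
proof -
  have "diff_subfield D UNIV" by (simp add: diff_subfield_def subfield_def)
  then show ?thesis
    unfolding diff_closure_def diff_subfield_def subfield_def by auto
qed

lemma closure_sub: "S \<subseteq> diff_closure D S"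
  unfolding diff_closure_def by auto

lemma closure_min: "diff_subfield D E \<Longrightarrow> S \<subseteq> E \<Longrightarrow> diff_closure D S \<subseteq> E"
  unfolding diff_closure_def by auto

section \<open>Darboux transfer\<close>

lemma sol_transfer:
  assumes d: "derivation D"
    and hV: "V = W*W - D W + l1" and hU: "U = W*W + D W + l1"
    and sol: "schr_sol D V l y" and dl: "D l = 0" "D l1 = 0"
  shows "schr_sol D U l (D y + W * y)"
    and "D (D y + W * y) = W * (D y + W * y) + (l1 - l) * y"
proof -
  have yy: "D (D y) = (V - l) * y" using sol unfolding schr_sol_def by (simp add: algebra_simps)
  define z where "z = D y + W * y"
  have dyz: "D y = z - W * y" by (simp add: z_def)
  have dz: "D z = W * z + (l1 - l) * y"
    unfolding z_def using d yy hV by (simp add: der_add der_mult algebra_simps)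
  have ddz: "D (D z) = D W * z + W * D z + (l1 - l) * D y"
  proof -
    have "D (D z) = D (W * z + (l1 - l) * y)" by (simp only: dz)
    then show ?thesis using d dl by (simp add: der_add der_mult der_diff)
  qed
  also have "\<dots> = (D W + W * W + (l1 - l)) * z"
    unfolding dz dyz by (simp add: algebra_simps)
  finally have "D (D z) = (D W + W * W + (l1 - l)) * z" .
  then show "schr_sol D U l (D y + W * y)"
    unfolding schr_sol_def z_def[symmetric] hU by (simp add: algebra_simps)
  show "D (D y + W * y) = W * (D y + W * y) + (l1 - l) * y" using dz z_def by simp
qed

lemma PV_transfer:
  assumes d: "derivation D" and K: "diff_subfield D K" and WK: "W \<in> K"
    and l1K: "l1 \<in> K" and lK: "l \<in> K" and ne: "l \<noteq> l1" and dl: "D l = 0" "D l1 = 0"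
    and hV: "V = W*W - D W + l1" and hU: "U = W*W + D W + l1"
    and PV: "PV_ext D K V l E"
  shows "PV_ext D K U l E"
proof -
  obtain y1 y2 where s1: "schr_sol D V l y1" and s2: "schr_sol D V l y2"
    and wr: "wronskian D y1 y2 \<noteq> 0" and E: "E = diff_closure D (K \<union> {y1, y2})"
    and cst: "{c \<in> E. D c = 0} = {c \<in> K. D c = 0}"
    using PV unfolding PV_ext_def by blast
  define z1 where "z1 = D y1 + W * y1"
  define z2 where "z2 = D y2 + W * y2"
  note t1 = sol_transfer[OF d hV hU s1 dl, folded z1_def]
  note t2 = sol_transfer[OF d hV hU s2 dl, folded z2_def]
  have c: "l1 - l \<noteq> 0" using ne by simp
  have "wronskian D z1 z2 = z1 * (W*z2 + (l1-l)*y2) - (W*z1 + (l1-l)*y1) * z2"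
    unfolding wronskian_def using t1(2) t2(2) by simp
  also have "\<dots> = - (l1 - l) * wronskian D y1 y2"
    unfolding wronskian_def z1_def z2_def by (simp add: algebra_simps)
  finally have "wronskian D z1 z2 = - (l1 - l) * wronskian D y1 y2" .
  with c wr have wz: "wronskian D z1 z2 \<noteq> 0" by simp
  let ?S = "diff_closure D (K \<union> {y1, y2})"
  let ?T = "diff_closure D (K \<union> {z1, z2})"
  have S: "diff_subfield D ?S" and T: "diff_subfield D ?T" by (rule closure_ds)+
  have KS: "K \<union> {y1, y2} \<subseteq> ?S" and KT: "K \<union> {z1, z2} \<subseteq> ?T" by (rule closure_sub)+
  have WS: "W \<in> ?S" "y1 \<in> ?S" "y2 \<in> ?S" using KS WK by auto
  have "z1 \<in> ?S" "z2 \<in> ?S"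
    unfolding z1_def z2_def using WS
    by (intro ds_props(3)[OF S] ds_props(7)[OF S] ds_props(5)[OF S]; simp)+
  with KS have "K \<union> {z1, z2} \<subseteq> ?S" by auto
  hence TS: "?T \<subseteq> ?S" by (rule closure_min[OF S])
  have y1: "y1 = (D z1 - W * z1) / (l1 - l)" using t1(2) c by (simp add: field_simps)
  have y2: "y2 = (D z2 - W * z2) / (l1 - l)" using t2(2) c by (simp add: field_simps)
  have cT: "l1 - l \<in> ?T" using KT l1K lK ds_props(4)[OF T] by auto
  have WT: "W \<in> ?T" "z1 \<in> ?T" "z2 \<in> ?T" using KT WK by auto
  have "y1 \<in> ?T"
    by (subst y1, rule ds_div[OF T ds_props(4)[OF T ds_props(7)[OF T WT(2)] ds_props(5)[OF T WT(1) WT(2)]] cT])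
  moreover have "y2 \<in> ?T"
    by (subst y2, rule ds_div[OF T ds_props(4)[OF T ds_props(7)[OF T WT(3)] ds_props(5)[OF T WT(1) WT(3)]] cT])
  ultimately
  have "K \<union> {y1, y2} \<subseteq> ?T" using KT by auto
  hence "?S \<subseteq> ?T" by (rule closure_min[OF T])
  with TS have "E = ?T" using E by auto
  then show ?thesis unfolding PV_ext_def using t1(1) t2(1) wz cst by blast
qed




section \<open>Rational functions\<close>

locale ihom =
  fixes \<iota> :: "complex \<Rightarrow> 'a::field"
  assumes iadd: "\<And>a b. \<iota> (a + b) = \<iota> a + \<iota> b"
    and imult: "\<And>a b. \<iota> (a * b) = \<iota> a * \<iota> b"
    and ione: "\<iota> 1 = 1"
begin

lemma izero: "\<iota> 0 = 0"
  using iadd[of 0 0] by (metis add.right_neutral add_left_cancel)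

lemma ineg: "\<iota> (- a) = - \<iota> a"
  using iadd[of a "-a"] izero by (metis add.right_inverse minus_unique)

lemma idiff: "\<iota> (a - b) = \<iota> a - \<iota> b"
  using iadd[of a "-b"] ineg[of b] by simp

lemma inz: "a \<noteq> 0 \<Longrightarrow> \<iota> a \<noteq> 0"
  using imult[of a "inverse a"] ione by force

lemma iinj: "inj \<iota>"
proof (rule injI)
  fix a b assume "\<iota> a = \<iota> b"
  then have "\<iota> (a - b) = 0" by (simp add: idiff)
  then show "a = b" using inz[of "a - b"] by auto
qed

lemma iofnat: "\<iota> (of_nat n) = of_nat n"
  by (induction n) (simp_all add: izero iadd ione)

lemma rng_add: "a \<in> range \<iota> \<Longrightarrow> b \<in> range \<iota> \<Longrightarrow> a + b \<in> range \<iota>"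
  by (auto simp: iadd[symmetric])
lemma rng_mult: "a \<in> range \<iota> \<Longrightarrow> b \<in> range \<iota> \<Longrightarrow> a * b \<in> range \<iota>"
  by (auto simp: imult[symmetric])
lemma rng_diff: "a \<in> range \<iota> \<Longrightarrow> b \<in> range \<iota> \<Longrightarrow> a - b \<in> range \<iota>"
  by (auto simp: idiff[symmetric])
lemma rng_0: "0 \<in> range \<iota>" using izero by (metis rangeI)
lemma rng_1: "1 \<in> range \<iota>" using ione by (metis rangeI)
lemma rng_ofnat: "of_nat n \<in> range \<iota>" using iofnat by (metis rangeI)

lemma rng_sum: "finite A \<Longrightarrow> (\<And>i. i \<in> A \<Longrightarrow> f i \<in> range \<iota>) \<Longrightarrow> sum f A \<in> range \<iota>"
  by (induction A rule: finite_induct) (auto simp: rng_0 rng_add)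

definition Pol :: "'a poly set" where "Pol = {P. \<forall>i. coeff P i \<in> range \<iota>}"

lemma Pol_add: "P \<in> Pol \<Longrightarrow> Q \<in> Pol \<Longrightarrow> P + Q \<in> Pol"
  by (auto simp: Pol_def rng_add)
lemma Pol_diff: "P \<in> Pol \<Longrightarrow> Q \<in> Pol \<Longrightarrow> P - Q \<in> Pol"
  by (auto simp: Pol_def rng_diff)
lemma Pol_mult: "P \<in> Pol \<Longrightarrow> Q \<in> Pol \<Longrightarrow> P * Q \<in> Pol"
  unfolding Pol_def by (auto simp: coeff_mult intro!: rng_sum rng_mult)
lemma Pol_const: "c \<in> range \<iota> \<Longrightarrow> [:c:] \<in> Pol"
  by (auto simp: Pol_def coeff_pCons rng_0 split: nat.splits)
lemma Pol_1: "1 \<in> Pol"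
  by (auto simp: Pol_def coeff_1 rng_0 rng_1)
lemma Pol_0: "0 \<in> Pol"
  by (auto simp: Pol_def rng_0)
lemma Pol_pderiv: assumes "P \<in> Pol" shows "pderiv P \<in> Pol"
  unfolding Pol_def mem_Collect_eq
proof
  fix i
  have c: "coeff P (Suc i) \<in> range \<iota>" using assms unfolding Pol_def by blast
  show "coeff (pderiv P) i \<in> range \<iota>"
    unfolding coeff_pderiv by (rule rng_mult[OF rng_ofnat c])
qed

lemma D_poly:
  assumes d: "derivation D" and dc: "\<And>c. D (\<iota> c) = 0" and dx: "D x = 1"
  shows "P \<in> Pol \<Longrightarrow> D (poly P x) = poly (pderiv P) x"
proof (induction P rule: pCons_induct)
  case 0
  then show ?case using der_zero[OF d] by simp
next
  case (pCons a p)
  have "coeff (pCons a p) 0 \<in> range \<iota>" using pCons.prems unfolding Pol_def by blast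
  then have a: "a \<in> range \<iota>" by simp
  have p: "p \<in> Pol" unfolding Pol_def
  proof (intro CollectI allI)
    fix i
    have "coeff (pCons a p) (Suc i) \<in> range \<iota>" using pCons.prems unfolding Pol_def by blast
    then show "coeff p i \<in> range \<iota>" by simp
  qed
  have Da: "D a = 0" using a dc by auto
  show ?case using pCons.IH[OF p] Da dx d
    by (simp add: pderiv_pCons der_add der_mult algebra_simps)
qed

definition Kalt :: "'a \<Rightarrow> 'a set" where
  "Kalt x = {poly P x / poly Q x | P Q. P \<in> Pol \<and> Q \<in> Pol \<and> poly Q x \<noteq> 0}"

lemma KaltI: "P \<in> Pol \<Longrightarrow> Q \<in> Pol \<Longrightarrow> poly Q x \<noteq> 0 \<Longrightarrow> a = poly P x / poly Q x \<Longrightarrow> a \<in> Kalt x"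
  unfolding Kalt_def by blast

lemma poly_eval_eq: "poly_eval \<iota> p x = poly (map_poly \<iota> p) x"
proof -
  have deg: "degree (map_poly \<iota> p) = degree p" by (rule degree_map_poly) (rule inz)
  show ?thesis unfolding poly_eval_def poly_altdef deg
    by (simp add: coeff_map_poly izero)
qed

lemma map_Pol: "map_poly \<iota> p \<in> Pol"
  by (auto simp: Pol_def coeff_map_poly izero)

lemma Pol_map: assumes "P \<in> Pol" shows "\<exists>p. P = map_poly \<iota> p"
proof -
  have i0: "inv \<iota> 0 = 0" using iinj izero by (metis inv_f_f)
  have "P = map_poly \<iota> (map_poly (inv \<iota>) P)"
    using assms by (intro poly_eqI) (auto simp: coeff_map_poly izero i0 Pol_def f_inv_into_f)
  then show ?thesis by blast
qed

lemma ratfun_eq: "ratfun_field \<iota> x = Kalt x"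
proof
  show "ratfun_field \<iota> x \<subseteq> Kalt x"
  proof
    fix a assume "a \<in> ratfun_field \<iota> x"
    then obtain p q where "poly_eval \<iota> q x \<noteq> 0" "a = poly_eval \<iota> p x / poly_eval \<iota> q x"
      unfolding ratfun_field_def by blast
    then show "a \<in> Kalt x" unfolding poly_eval_eq
      by (intro KaltI[of "map_poly \<iota> p" "map_poly \<iota> q"] map_Pol)
  qed
next
  show "Kalt x \<subseteq> ratfun_field \<iota> x"
  proof
    fix a assume "a \<in> Kalt x"
    then obtain P Q where PQ: "P \<in> Pol" "Q \<in> Pol" "poly Q x \<noteq> 0" "a = poly P x / poly Q x"
      unfolding Kalt_def by blast
    obtain p q where "P = map_poly \<iota> p" "Q = map_poly \<iota> q" using Pol_map PQ by metis
    then show "a \<in> ratfun_field \<iota> x" unfolding ratfun_field_def poly_eval_eq[symmetric] using PQ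
      by (intro CollectI exI[of _ p] exI[of _ q]) (simp add: poly_eval_eq)
  qed
qed

lemma range_Kalt: "\<iota> c \<in> Kalt x"
proof -
  have "\<iota> c = poly [:\<iota> c:] x / poly 1 x" by simp
  then show ?thesis using Pol_const[of "\<iota> c"] Pol_1 by (intro KaltI[of "[:\<iota> c:]" 1]) auto
qed

lemma Kalt_ds:
  assumes d: "derivation D" and dc: "\<And>c. D (\<iota> c) = 0" and dx: "D x = 1"
  shows "diff_subfield D (Kalt x)"
  unfolding diff_subfield_def subfield_def
proof (intro conjI ballI)
  show "0 \<in> Kalt x" using range_Kalt[of 0] izero by simp
  show "1 \<in> Kalt x" using range_Kalt[of 1] ione by simp
next
  fix a b assume "a \<in> Kalt x" "b \<in> Kalt x"
  then obtain P Q P' Q' where A: "P \<in> Pol" "Q \<in> Pol" "poly Q x \<noteq> 0" "a = poly P x / poly Q x"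
    and B: "P' \<in> Pol" "Q' \<in> Pol" "poly Q' x \<noteq> 0" "b = poly P' x / poly Q' x"
    unfolding Kalt_def by blast
  have nz: "poly (Q * Q') x \<noteq> 0" using A B by simp
  have "a + b = poly (P * Q' + P' * Q) x / poly (Q * Q') x"
    unfolding A(4) B(4) using A(3) B(3) by (simp add: field_simps)
  then show "a + b \<in> Kalt x" using nz A B
    by (intro KaltI[of "P * Q' + P' * Q" "Q * Q'"] Pol_add Pol_mult)
  have "a - b = poly (P * Q' - P' * Q) x / poly (Q * Q') x"
    unfolding A(4) B(4) using A(3) B(3) by (simp add: field_simps)
  then show "a - b \<in> Kalt x" using nz A B
    by (intro KaltI[of "P * Q' - P' * Q" "Q * Q'"] Pol_diff Pol_mult)
  have "a * b = poly (P * P') x / poly (Q * Q') x"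
    unfolding A(4) B(4) using A(3) B(3) by (simp add: field_simps)
  then show "a * b \<in> Kalt x" using nz A B
    by (intro KaltI[of "P * P'" "Q * Q'"] Pol_mult)
next
  fix a assume "a \<in> Kalt x"
  then obtain P Q where A: "P \<in> Pol" "Q \<in> Pol" "poly Q x \<noteq> 0" "a = poly P x / poly Q x"
    unfolding Kalt_def by blast
  show "inverse a \<in> Kalt x"
  proof (cases "poly P x = 0")
    case True
    then show ?thesis using A range_Kalt[of 0] izero by simp
  next
    case False
    have "inverse a = poly Q x / poly P x" using A by simp
    then show ?thesis using A False by (intro KaltI[of Q P])
  qed
  have "D a = (D (poly P x) * poly Q x - poly P x * D (poly Q x)) / (poly Q x * poly Q x)"
    using A der_div[OF d] by simp
  also have "\<dots> = poly (pderiv P * Q - P * pderiv Q) x / poly (Q * Q) x"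
    using D_poly[OF d dc dx] A by simp
  finally have Da: "D a = poly (pderiv P * Q - P * pderiv Q) x / poly (Q * Q) x" .
  have nzQ: "poly (Q * Q) x \<noteq> 0" using A(3) by simp
  show "D a \<in> Kalt x"
    by (rule KaltI[OF Pol_diff[OF Pol_mult[OF Pol_pderiv[OF A(1)] A(2)] Pol_mult[OF A(1) Pol_pderiv[OF A(2)]]]
          Pol_mult[OF A(2) A(2)] nzQ Da])
qed

end

theorem corollary2p2p14:
  fixes D :: "'a::field \<Rightarrow> 'a" and \<iota> :: "complex \<Rightarrow> 'a"
    and x Vm Vp \<Psi> W :: 'a and lam1 :: complex
  assumes deriv: "derivation D"
    and iota_add: "\<And>a b. \<iota> (a + b) = \<iota> a + \<iota> b"
    and iota_mult: "\<And>a b. \<iota> (a * b) = \<iota> a * \<iota> b"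
    and iota_one: "\<iota> 1 = 1"
    and constants: "{c. D c = 0} = range \<iota>"
    and Dx: "D x = 1"
    and fundamental: "\<And>lam. \<forall>V\<in>{Vm, Vp}. \<exists>y1 y2. schr_sol D V (\<iota> lam) y1 \<and>
                         schr_sol D V (\<iota> lam) y2 \<and> wronskian D y1 y2 \<noteq> 0"
    and Vm_rat: "Vm \<in> ratfun_field \<iota> x"
    and Psi_nz: "\<Psi> \<noteq> 0"
    and Psi_sol: "schr_sol D Vm (\<iota> lam1) \<Psi>"
    and W_def: "W = - (D \<Psi> / \<Psi>)"
    and W_alg: "algebraic_over (ratfun_field \<iota> x) W"
    and Vp_def: "Vp = Vm - 2 * D (D \<Psi> / \<Psi>)"
  shows "W \<in> ratfun_field \<iota> x \<longleftrightarrow>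
           (Vp \<in> ratfun_field \<iota> x \<and>
            (\<forall>lam. lam \<noteq> lam1 \<longrightarrow>
               (\<forall>E. PV_ext D (ratfun_field \<iota> x) Vm (\<iota> lam) E \<longleftrightarrow>
                    PV_ext D (ratfun_field \<iota> x) Vp (\<iota> lam) E)))"
proof -
  interpret ihom \<iota> using iota_add iota_mult iota_one by unfold_locales
  let ?K = "ratfun_field \<iota> x"
  let ?l1 = "\<iota> lam1"
  have dc: "D (\<iota> c) = 0" for c
  proof -
    have "\<iota> c \<in> {c. D c = 0}" unfolding constants by (rule rangeI)
    then show ?thesis by simp
  qed
  have K: "diff_subfield D ?K" unfolding ratfun_eq using Kalt_ds[OF deriv dc Dx] .
  have rK: "\<And>c. \<iota> c \<in> ?K" unfolding ratfun_eq by (rule range_Kalt)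
  have sol: "D (D \<Psi>) = (Vm - ?l1) * \<Psi>"
    using Psi_sol unfolding schr_sol_def by (simp add: algebra_simps)
  have q: "D (D \<Psi> / \<Psi>) = (D (D \<Psi>) * \<Psi> - D \<Psi> * D \<Psi>) / (\<Psi> * \<Psi>)"
    using der_div[OF deriv Psi_nz] .
  also have "\<dots> = (Vm - ?l1) - (D \<Psi> / \<Psi>) * (D \<Psi> / \<Psi>)"
    unfolding sol using Psi_nz by (simp add: field_simps)
  finally have q2: "D (D \<Psi> / \<Psi>) = (Vm - ?l1) - W * W" unfolding W_def by simp
  have DW: "D W = W * W - (Vm - ?l1)"
    unfolding W_def der_neg[OF deriv] using q2 W_def by simp
  have hVm: "Vm = W * W - D W + ?l1" using DW by simp
  have hVp: "Vp = W * W + D W + ?l1" unfolding Vp_def q2 using DW by simp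
  have DnW: "D (- W) = - D W" by (rule der_neg[OF deriv])
  have hVm': "Vm = (- W) * (- W) + D (- W) + ?l1" using hVm DnW by simp
  have hVp': "Vp = (- W) * (- W) - D (- W) + ?l1" using hVp DnW by simp
  have two: "(2::'a) \<noteq> 0"
  proof -
    have "\<iota> 2 = 2" using iota_add[of 1 1] iota_one by simp
    then show ?thesis using inz[of 2] by simp
  qed
  show ?thesis
  proof
    assume WK: "W \<in> ?K"
    have "Vp \<in> ?K" unfolding hVp
      by (intro ds_props(3)[OF K] ds_props(5)[OF K] ds_props(7)[OF K] WK rK)
    moreover have "\<forall>lam. lam \<noteq> lam1 \<longrightarrow>
               (\<forall>E. PV_ext D ?K Vm (\<iota> lam) E \<longleftrightarrow> PV_ext D ?K Vp (\<iota> lam) E)"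
    proof (intro allI impI)
      fix lam E assume ne: "lam \<noteq> lam1"
      have ne': "\<iota> lam \<noteq> \<iota> lam1" using ne iinj by (meson injD)
      have nWK: "- W \<in> ?K" using ds_neg[OF K WK] .
      show "PV_ext D ?K Vm (\<iota> lam) E \<longleftrightarrow> PV_ext D ?K Vp (\<iota> lam) E"
        using PV_transfer[OF deriv K WK rK rK ne' dc dc hVm hVp]
          PV_transfer[OF deriv K nWK rK rK ne' dc dc hVp' hVm'] by blast
    qed
    ultimately show "Vp \<in> ?K \<and> (\<forall>lam. lam \<noteq> lam1 \<longrightarrow>
               (\<forall>E. PV_ext D ?K Vm (\<iota> lam) E \<longleftrightarrow> PV_ext D ?K Vp (\<iota> lam) E))" by blast
  next
    assume "Vp \<in> ?K \<and> (\<forall>lam. lam \<noteq> lam1 \<longrightarrow>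
               (\<forall>E. PV_ext D ?K Vm (\<iota> lam) E \<longleftrightarrow> PV_ext D ?K Vp (\<iota> lam) E))"
    then have VpK: "Vp \<in> ?K" by blast
    have twoK: "(2::'a) \<in> ?K" using ds_props(3)[OF K ds_props(2)[OF K] ds_props(2)[OF K]] by simp
    have eDW: "D W = (Vp - Vm) / 2" using hVm hVp two by (simp add: field_simps)
    have eWW: "W * W = (Vm + Vp - 2 * ?l1) / 2" using hVm hVp two by (simp add: field_simps)
    have DWK: "D W \<in> ?K" unfolding eDW
      by (intro ds_div[OF K] ds_props(4)[OF K] VpK Vm_rat twoK)
    have WWK: "W * W \<in> ?K" unfolding eWW
      by (intro ds_div[OF K] ds_props(4)[OF K] ds_props(3)[OF K] ds_props(5)[OF K] VpK Vm_rat twoK rK)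
    show "W \<in> ?K"
    proof (cases "D W = 0")
      case True
      then have "W \<in> {c. D c = 0}" by simp
      then have "W \<in> range \<iota>" unfolding constants .
      then show ?thesis using rK by auto
    next
      case False
      have "D (W * W) = 2 * W * D W" using der_mult[OF deriv, of W W] by simp
      then have eqW: "W = D (W * W) / (2 * D W)" using False two by (simp add: field_simps)
      show ?thesis
        by (subst eqW) (intro ds_div[OF K] ds_props(7)[OF K] ds_props(5)[OF K] WWK twoK DWK)
    qed
  qed
qed

end
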